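(* Let $\mu>0$ and $\rho>0$, and let $x\in\mathbb{R}^n$ satisfy $c_i(x)>0$ for all $i=1,\dots,m$. Then $s\mapsto F(x,s;\mu,\rho)$ attains its maximum over $\mathbb{R}^m$ uniquely at $s_i=\mu/c_i(x)$, $i=1,\dots,m$, and $$\max_{s\in\mathbb{R}^m}F(x,s;\mu,\rho)=f(x)-\mu\sum_{i=1}^m\ln c_i(x).$$ Consequently, restricted to points with $c(x)>0$, the minimax problem $\min_x\max_s F(x,s;\mu,\rho)$ reduces to the logarithmic-barrier problem $\min_x f(x)-\mu\sum_{i=1}^m\ln c_i(x)$.
   Context: Let $f:\mathbb{R}^n\to\mathbb{R}$ and $c=(c_1,\dots,c_m):\mathbb{R}^n\to\mathbb{R}^m$ be twice continuously differentiable. For parameters $\mu>0$, $\rho>0$ and variables $x\in\mathbb{R}^n$, $s\in\mathbb{R}^m$, define for $i=1,\dots,m$: $z_i(x,s;\mu,\rho)=\frac{1}{2\rho}\big(\sqrt{(s_i-\rho c_i(x))^2+4\rho\mu}-(s_i-\rho c_i(x))\big)$, $y_i(x,s;\mu,\rho)=\frac{1}{2\rho}\big(\sqrt{(s_i-\rho c_i(x))^2+4\rho\mu}+(s_i-\rho c_i(x))\big)$, $h_i(x,s;\mu,\rho)=-\mu\ln z_i(x,s;\mu,\rho)+\frac{\rho}{2}y_i(x,s;\mu,\rho)^2-\frac{1}{2\rho}s_i^2$, and the augmented Lagrangian $F(x,s;\mu,\rho)=f(x)+\sum_{i=1}^m h_i(x,s;\mu,\rho)$. *)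

theory Defs
  imports "HOL-Analysis.Analysis"
begin

text \<open>Constraint index set is the finite type 'm (m = CARD('m)); variables x live in real^'n.
  c i x is the i-th constraint value c_i(x).\<close>

definition zfun :: "real \<Rightarrow> real \<Rightarrow> real \<Rightarrow> real \<Rightarrow> real" where
  "zfun mu rho ci si = (sqrt ((si - rho * ci)^2 + 4 * rho * mu) - (si - rho * ci)) / (2 * rho)"

definition yfun :: "real \<Rightarrow> real \<Rightarrow> real \<Rightarrow> real \<Rightarrow> real" where
  "yfun mu rho ci si = (sqrt ((si - rho * ci)^2 + 4 * rho * mu) + (si - rho * ci)) / (2 * rho)"

definition hfun :: "real \<Rightarrow> real \<Rightarrow> real \<Rightarrow> real \<Rightarrow> real" where
  "hfun mu rho ci si = - mu * ln (zfun mu rho ci si) + rho / 2 * (yfun mu rho ci si)^2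
      - si^2 / (2 * rho)"

definition AL :: "(real^'n \<Rightarrow> real) \<Rightarrow> ('m::finite \<Rightarrow> real^'n \<Rightarrow> real)
      \<Rightarrow> real^'n \<Rightarrow> real^'m \<Rightarrow> real \<Rightarrow> real \<Rightarrow> real" where
  "AL f c x s mu rho = f x + (\<Sum>i\<in>UNIV. hfun mu rho (c i x) (s $ i))"

end

theory Submission
  imports Defs
begin

lemma h_formula:
  fixes mu rho c s :: real
  assumes mu: "mu > 0" and rho: "rho > 0"
  shows "zfun mu rho c s > 0 \<and>
    hfun mu rho c s = - mu * ln (zfun mu rho c s) - rho * (c - zfun mu rho c s)^2 / 2
        - c * mu / zfun mu rho c s + mu \<and>
    s = rho * c + mu / zfun mu rho c s - rho * zfun mu rho c s"
proof -
  define t where "t = s - rho * c"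
  define D where "D = sqrt (t^2 + 4*rho*mu)"
  have nn: "0 \<le> t^2 + 4*rho*mu" using mu rho
    by (intro add_nonneg_nonneg) (auto intro: mult_nonneg_nonneg)
  have D2: "D^2 = t^2 + 4*rho*mu" unfolding D_def using real_sqrt_pow2[OF nn] .
  have Dpos: "D \<ge> 0" unfolding D_def using nn by simp
  have "sqrt (t^2) < D" unfolding D_def using mu rho
    by (intro real_sqrt_less_mono) simp
  hence "\<bar>t\<bar> < D" by simp
  define z where "z = (D - t) / (2*rho)"
  define y where "y = (D + t) / (2*rho)"
  have zdef: "zfun mu rho c s = z" unfolding zfun_def z_def D_def t_def by simp
  have ydef: "yfun mu rho c s = y" unfolding yfun_def y_def D_def t_def by simp
  have zpos: "z > 0" unfolding z_def using \<open>\<bar>t\<bar> < D\<close> rho by auto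
  have zy: "z * y = mu / rho" unfolding z_def y_def using D2 rho
    by (simp add: field_simps power2_eq_square)
  have yz: "y = mu / (rho * z)" using zy zpos rho by (simp add: field_simps)
  have sform: "s = rho * c + rho * y - rho * z" unfolding y_def z_def t_def using rho
    by (simp add: field_simps)
  have s2: "s = rho * c + mu / z - rho * z" using sform yz rho zpos by simp
  have "hfun mu rho c s = - mu * ln z + rho / 2 * y^2 - s^2 / (2*rho)"
    unfolding hfun_def zdef ydef by simp
  also have "\<dots> = - mu * ln z - rho * (c - z)^2 / 2 - c * mu / z + mu"
    unfolding s2 yz using rho zpos by (simp add: field_simps power2_eq_square)
  finally show ?thesis using zdef zpos s2 by simp
qed

lemma h_bound:
  fixes mu rho c s :: real
  assumes mu: "mu > 0" and rho: "rho > 0" and c: "c > 0"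
  shows "hfun mu rho c s \<le> - mu * ln c"
    and "hfun mu rho c s = - mu * ln c \<Longrightarrow> s = mu / c"
    and "hfun mu rho c (mu / c) = - mu * ln c"
proof -
  have key: "hfun mu rho c s \<le> - mu * ln c - rho * (c - zfun mu rho c s)^2 / 2" for s
  proof -
    obtain z where zd: "zfun mu rho c s = z" by simp
    from h_formula[OF mu rho, of c s] zd have zpos: "z > 0"
      and hf: "hfun mu rho c s = - mu * ln z - rho * (c - z)^2 / 2 - c * mu / z + mu" by auto
    have "ln (c / z) \<le> c / z - 1" using c zpos by (intro ln_le_minus_one) simp
    hence "ln c - ln z \<le> c / z - 1" using c zpos by (simp add: ln_div)
    hence "mu * (ln c - ln z) \<le> mu * (c / z - 1)" using mu by (simp add: mult_left_mono)
    thus ?thesis using hf zd by (simp add: algebra_simps)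
  qed
  have "0 \<le> rho * (c - zfun mu rho c s)^2 / 2" using rho by simp
  thus "hfun mu rho c s \<le> - mu * ln c" using key[of s] by linarith
  show "s = mu / c" if "hfun mu rho c s = - mu * ln c"
  proof -
    have "rho * (c - zfun mu rho c s)^2 / 2 \<le> 0" using key[of s] that by simp
    moreover have "0 \<le> rho * (c - zfun mu rho c s)^2" using rho by simp
    ultimately have "rho * (c - zfun mu rho c s)^2 = 0" by linarith
    hence "zfun mu rho c s = c" using rho by simp
    thus ?thesis using h_formula[OF mu rho, of c s] by simp
  qed
  have "zfun mu rho c (mu / c) = c"
  proof -
    have "(mu / c - rho * c)^2 + 4*rho*mu = (mu / c + rho * c)^2" using c
      by (simp add: power2_eq_square field_simps)
    moreover have "mu / c + rho * c \<ge> 0" using mu rho c by simp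
    ultimately show ?thesis unfolding zfun_def using rho by simp
  qed
  thus "hfun mu rho c (mu / c) = - mu * ln c"
    using h_formula[OF mu rho, of c "mu / c"] by simp
qed

theorem theorem3p2:
  fixes f :: "real^'n \<Rightarrow> real"
    and c :: "'m::finite \<Rightarrow> real^'n \<Rightarrow> real"
    and x :: "real^'n" and mu rho :: real
  assumes "mu > 0" and "rho > 0"
    and "\<forall>i. c i x > 0"
  shows "(\<forall>s. AL f c x s mu rho \<le> AL f c x (\<chi> i. mu / c i x) mu rho)
       \<and> (\<forall>s. AL f c x s mu rho = AL f c x (\<chi> i. mu / c i x) mu rho
               \<longrightarrow> s = (\<chi> i. mu / c i x))
       \<and> AL f c x (\<chi> i. mu / c i x) mu rho = f x - mu * (\<Sum>i\<in>UNIV. ln (c i x))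
       \<and> (SUP s. AL f c x s mu rho) = f x - mu * (\<Sum>i\<in>UNIV. ln (c i x))"
proof -
  note mu = assms(1) and rho = assms(2) and cp = assms(3)
  define s0 :: "real^'m" where "s0 = (\<chi> i. mu / c i x)"
  have val: "AL f c x s0 mu rho = f x - mu * (\<Sum>i\<in>UNIV. ln (c i x))"
    unfolding AL_def s0_def using h_bound(3)[OF mu rho] cp
    by (simp add: sum_distrib_left sum_negf)
  have le: "AL f c x s mu rho \<le> f x - mu * (\<Sum>i\<in>UNIV. ln (c i x))" for s
  proof -
    have "(\<Sum>i\<in>UNIV. hfun mu rho (c i x) (s $ i)) \<le> (\<Sum>i\<in>UNIV. - mu * ln (c i x))"
      by (rule sum_mono) (use h_bound(1)[OF mu rho] cp in auto)
    thus ?thesis unfolding AL_def by (simp add: sum_distrib_left sum_negf)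
  qed
  have eq: "s = s0" if "AL f c x s mu rho = AL f c x s0 mu rho" for s
  proof -
    have "(\<Sum>i\<in>UNIV. hfun mu rho (c i x) (s $ i)) = (\<Sum>i\<in>UNIV. - mu * ln (c i x))"
      using that val unfolding AL_def by (simp add: sum_distrib_left sum_negf)
    hence "(\<Sum>i\<in>UNIV. - mu * ln (c i x) - hfun mu rho (c i x) (s $ i)) = 0"
      by (simp add: sum_subtractf)
    moreover have "\<forall>i\<in>UNIV. 0 \<le> - mu * ln (c i x) - hfun mu rho (c i x) (s $ i)"
      using h_bound(1)[OF mu rho] cp by auto
    ultimately have "\<forall>i\<in>UNIV. - mu * ln (c i x) - hfun mu rho (c i x) (s $ i) = 0"
      by (subst (asm) sum_nonneg_eq_0_iff) auto
    hence "\<forall>i. s $ i = mu / c i x" using h_bound(2)[OF mu rho] cp by auto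
    thus ?thesis unfolding s0_def by (simp add: vec_eq_iff)
  qed
  have sup: "(SUP s. AL f c x s mu rho) = f x - mu * (\<Sum>i\<in>UNIV. ln (c i x))"
    using le val by (intro cSup_eq_maximum) (auto intro!: range_eqI[of _ _ s0])
  have A: "\<forall>s. AL f c x s mu rho \<le> AL f c x s0 mu rho" using le val by simp
  have B: "\<forall>s. AL f c x s mu rho = AL f c x s0 mu rho \<longrightarrow> s = s0" using eq by blast
  show ?thesis unfolding s0_def[symmetric] using A B val sup by blast
qed

end
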